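(* Fix an integer $J\ge 2$, a finite set $\mathcal{G}$ of group labels, and strictly decreasing positive weights $w_1>w_2>\cdots>w_J>0$. Consider a single query (indices $q$ suppressed) in which there are $J$ candidates $j=1,\dots,J$, each with a feature vector $X_j$, a group status $G_j\in\mathcal{G}$ and a real-valued integrable outcome $Y_j$, all defined on a common probability space. Let $\mathcal{I}=\{(X_j,G_j)\}_{j=1}^J$ be the Ranker's information, and let the ranking $j(\cdot):\{1,\dots,J\}\to\{1,\dots,J\}$ be a bijection that is a (measurable) function of $\mathcal{I}$, where $j(r)$ is the index of the candidate placed in rank $r$. Write $\mathbf{G}=(G_{j(1)},\dots,G_{j(J)})$ for the rank-ordered vector of group statuses. Suppose the Ranker is unbiased, i.e. for almost every realization of $\mathcal{I}$ the ranking $j(\cdot)$ maximizes $E\left[\sum_{r=1}^J w_r Y_{j(r)}\,\middle|\,\mathcal{I}\right]$ over all bijections of $\{1,\dots,J\}$. Then for all ranks $1\le a<b\le J$ and all $g\in\mathcal{G}^J$ with $P(\mathbf{G}=g)>0$, $$E\left[Y_{j(a)}-Y_{j(b)}\,\middle|\,\mathbf{G}=g\right]\ \ge\ 0.$$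
   Context: The outcomes $Y_j$ are realized after the ranking and do not depend on the ranking. An Auditor observes only the rank-ordered outcomes $(Y_{j(1)},\dots,Y_{j(J)})$ and the rank-ordered group statuses $\mathbf{G}$, not the features $X_j$. Rank 1 is the best rank and there are no ties. *)

theory Defs
  imports "HOL-Probability.Probability"
begin

definition info_algebra ::
  "'a measure \<Rightarrow> nat \<Rightarrow> (nat \<Rightarrow> 'a \<Rightarrow> 'x) \<Rightarrow> 'x measure \<Rightarrow> (nat \<Rightarrow> 'a \<Rightarrow> 'g) \<Rightarrow> 'a measure" where
  "info_algebra M J X MX G =
     sigma (space M)
       ((\<Union>j\<in>{1..J}. {X j -` A \<inter> space M | A. A \<in> sets MX}) \<union>
        (\<Union>j\<in>{1..J}. {G j -` A \<inter> space M | A. True}))"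

definition cond_exp_event :: "'a measure \<Rightarrow> 'a set \<Rightarrow> ('a \<Rightarrow> real) \<Rightarrow> real" where
  "cond_exp_event M A f = (\<integral>\<omega>. indicator A \<omega> * f \<omega> \<partial>M) / measure M A"

end

theory Submission
  imports Defs
begin

theorem proposition1:
  fixes M :: "'a measure"
    and J :: nat
    and w :: "nat \<Rightarrow> real"
    and X :: "nat \<Rightarrow> 'a \<Rightarrow> 'x" and MX :: "'x measure"
    and G :: "nat \<Rightarrow> 'a \<Rightarrow> 'g::finite"
    and Y :: "nat \<Rightarrow> 'a \<Rightarrow> real"
    and \<sigma> :: "'a \<Rightarrow> nat \<Rightarrow> nat"
  assumes "prob_space M"
    and "J \<ge> 2"
    and w_dec: "\<And>r s. 1 \<le> r \<Longrightarrow> r < s \<Longrightarrow> s \<le> J \<Longrightarrow> w r > w s"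
    and w_pos: "w J > 0"
    and X_meas: "\<And>j. j \<in> {1..J} \<Longrightarrow> X j \<in> M \<rightarrow>\<^sub>M MX"
    and G_meas: "\<And>j. j \<in> {1..J} \<Longrightarrow> G j \<in> M \<rightarrow>\<^sub>M count_space UNIV"
    and Y_int: "\<And>j. j \<in> {1..J} \<Longrightarrow> integrable M (Y j)"
    and \<sigma>_bij: "\<And>\<omega>. \<omega> \<in> space M \<Longrightarrow> bij_betw (\<sigma> \<omega>) {1..J} {1..J}"
    and \<sigma>_meas: "\<And>r j. r \<in> {1..J} \<Longrightarrow> j \<in> {1..J} \<Longrightarrow>
                  {\<omega> \<in> space M. \<sigma> \<omega> r = j} \<in> sets (info_algebra M J X MX G)"
    and unbiased: "AE \<omega> in M. \<forall>\<pi>. bij_betw \<pi> {1..J} {1..J} \<longrightarrow>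
         real_cond_exp M (info_algebra M J X MX G) (\<lambda>\<omega>'. \<Sum>r\<in>{1..J}. w r * Y (\<pi> r) \<omega>') \<omega>
         \<le> real_cond_exp M (info_algebra M J X MX G) (\<lambda>\<omega>'. \<Sum>r\<in>{1..J}. w r * Y (\<sigma> \<omega> r) \<omega>') \<omega>"
  shows "\<forall>a b (g :: nat \<Rightarrow> 'g). 1 \<le> a \<longrightarrow> a < b \<longrightarrow> b \<le> J \<longrightarrow>
           measure M {\<omega> \<in> space M. \<forall>r\<in>{1..J}. G (\<sigma> \<omega> r) \<omega> = g r} > 0 \<longrightarrow>
           cond_exp_event M {\<omega> \<in> space M. \<forall>r\<in>{1..J}. G (\<sigma> \<omega> r) \<omega> = g r}
              (\<lambda>\<omega>. Y (\<sigma> \<omega> a) \<omega> - Y (\<sigma> \<omega> b) \<omega>) \<ge> 0"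
proof (intro allI impI)
  fix a b :: nat and g :: "nat \<Rightarrow> 'g"
  assume a1: "1 \<le> a" and ab: "a < b" and bJ: "b \<le> J"
  let ?A = "{\<omega> \<in> space M. \<forall>r\<in>{1..J}. G (\<sigma> \<omega> r) \<omega> = g r}"
  assume mpos: "measure M ?A > 0"
  interpret P: prob_space M by fact
  define F where "F = info_algebra M J X MX G"
  define gens where "gens = ((\<Union>j\<in>{1..J}. {X j -` A \<inter> space M | A. A \<in> sets MX}) \<union>
        (\<Union>j\<in>{1..J}. {G j -` A \<inter> space M | A. True}))"
  have gensP: "gens \<subseteq> Pow (space M)" unfolding gens_def by auto
  have gensM: "gens \<subseteq> sets M"
  proof
    fix S assume "S \<in> gens"
    then show "S \<in> sets M" unfolding gens_def
    proof (elim UnE UN_E CollectE exE conjE)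
      fix j A assume "j \<in> {1..J}" "S = X j -` A \<inter> space M" "A \<in> sets MX"
      then show ?thesis using X_meas measurable_sets by blast
    next
      fix j A assume "j \<in> {1..J}" "S = G j -` A \<inter> space M"
      then show ?thesis using G_meas[of j] measurable_sets[of "G j" M "count_space UNIV" A] by auto
    qed
  qed
  have Fdef: "F = sigma (space M) gens" unfolding F_def gens_def info_algebra_def by simp
  have spF: "space F = space M" unfolding Fdef by (simp add: space_measure_of_conv)
  have setsF: "sets F = sigma_sets (space M) gens" unfolding Fdef using gensP by (simp add: sets_measure_of)
  have FM: "sets F \<subseteq> sets M" unfolding setsF using gensM by (rule sets.sigma_sets_subset)
  have subalg: "subalgebra M F" unfolding subalgebra_def using spF FM by simp
  interpret S: finite_measure_subalgebra M F
    by unfold_locales (rule subalg)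
  have Gin: "{\<omega> \<in> space M. G j \<omega> = c} \<in> sets F" if "j \<in> {1..J}" for j c
  proof -
    have "G j -` {c} \<inter> space M \<in> gens" unfolding gens_def using that by blast
    then have "G j -` {c} \<inter> space M \<in> sets F" unfolding setsF by (rule sigma_sets.Basic)
    moreover have "G j -` {c} \<inter> space M = {\<omega> \<in> space M. G j \<omega> = c}" by auto
    ultimately show ?thesis by simp
  qed
  have \<sigma>in: "{\<omega> \<in> space M. \<sigma> \<omega> r = j} \<in> sets F" if "r \<in> {1..J}" "j \<in> {1..J}" for r j
    using \<sigma>_meas[OF that] unfolding F_def .
  have AF: "?A \<in> sets F"
  proof -
    have "{\<omega> \<in> space F. \<forall>r\<in>{1..J}. \<exists>j\<in>{1..J}. \<sigma> \<omega> r = j \<and> G j \<omega> = g r} \<in> sets F"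
    proof (rule sets.sets_Collect_finite_All[OF _ finite_atLeastAtMost])
      fix r assume r: "r \<in> {1..J}"
      show "{\<omega> \<in> space F. \<exists>j\<in>{1..J}. \<sigma> \<omega> r = j \<and> G j \<omega> = g r} \<in> sets F"
      proof (rule sets.sets_Collect_finite_Ex[OF _ finite_atLeastAtMost])
        fix j assume j: "j \<in> {1..J}"
        have "{\<omega> \<in> space M. \<sigma> \<omega> r = j} \<inter> {\<omega> \<in> space M. G j \<omega> = g r} \<in> sets F"
          using \<sigma>in[OF r j] Gin[OF j] by blast
        moreover have "{\<omega> \<in> space F. \<sigma> \<omega> r = j \<and> G j \<omega> = g r} =
            {\<omega> \<in> space M. \<sigma> \<omega> r = j} \<inter> {\<omega> \<in> space M. G j \<omega> = g r}" using spF by auto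
        ultimately show "{\<omega> \<in> space F. \<sigma> \<omega> r = j \<and> G j \<omega> = g r} \<in> sets F" by simp
      qed
    qed
    moreover have "{\<omega> \<in> space F. \<forall>r\<in>{1..J}. \<exists>j\<in>{1..J}. \<sigma> \<omega> r = j \<and> G j \<omega> = g r} = ?A"
    proof -
      have "\<sigma> \<omega> r \<in> {1..J}" if "\<omega> \<in> space M" "r \<in> {1..J}" for \<omega> r
        using \<sigma>_bij[OF that(1)] that(2) bij_betwE by blast
      then show ?thesis using spF by fastforce
    qed
    ultimately show ?thesis by simp
  qed
  define B where "B p = {\<omega> \<in> space M. \<forall>r\<in>{1..J}. \<sigma> \<omega> r = p r}" for p :: "nat \<Rightarrow> nat"
  define Pm where "Pm = {p \<in> {1..J} \<rightarrow>\<^sub>E {1..J}. bij_betw p {1..J} {1..J}}"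
  have finP: "finite Pm" unfolding Pm_def by (rule finite_subset[of _ "{1..J} \<rightarrow>\<^sub>E {1..J}"]) (auto intro: finite_PiE)
  have BF: "B p \<in> sets F" if "p \<in> Pm" for p
  proof -
    have "{\<omega> \<in> space F. \<forall>r\<in>{1..J}. \<sigma> \<omega> r = p r} \<in> sets F"
    proof (rule sets.sets_Collect_finite_All[OF _ finite_atLeastAtMost])
      fix r assume r: "r \<in> {1..J}"
      then have "p r \<in> {1..J}" using that unfolding Pm_def by auto
      then show "{\<omega> \<in> space F. \<sigma> \<omega> r = p r} \<in> sets F" using \<sigma>in[OF r] spF by simp
    qed
    then show ?thesis unfolding B_def using spF by simp
  qed
  have ABF: "?A \<inter> B p \<in> sets F" if "p \<in> Pm" for p using AF BF[OF that] by blast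
  have ABM: "?A \<inter> B p \<in> sets M" if "p \<in> Pm" for p using ABF[OF that] FM by blast
  have pJ: "p r \<in> {1..J}" if "p \<in> Pm" "r \<in> {1..J}" for p r using that unfolding Pm_def by auto
  have aJ: "a \<in> {1..J}" and bJ': "b \<in> {1..J}" using a1 ab bJ by auto
  have YI: "integrable M (Y (p r))" if "p \<in> Pm" "r \<in> {1..J}" for p r using Y_int pJ[OF that] by blast
  define t where "t r = (if r = a then b else if r = b then a else r)" for r
  have tbij: "bij_betw t {1..J} {1..J}"
    by (rule bij_betw_byWitness[where f'=t]) (use a1 ab bJ in \<open>auto simp: t_def\<close>)
  define S where "S p = (\<lambda>\<omega>. \<Sum>r\<in>{1..J}. w r * Y (p r) \<omega>)" for p :: "nat \<Rightarrow> nat"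
  have SI: "integrable M (S p)" if "bij_betw p {1..J} {1..J}" for p
    unfolding S_def
  proof (rule Bochner_Integration.integrable_sum[where f="\<lambda>r x. w r * Y (p r) x"])
    fix r assume "r \<in> {1..J}"
    then have "p r \<in> {1..J}" using that bij_betwE by blast
    then show "integrable M (\<lambda>x. w r * Y (p r) x)" using Y_int by (intro integrable_mult_right) auto
  qed
  have Sdiff: "S p \<omega> - S (p \<circ> t) \<omega> = (w a - w b) * (Y (p a) \<omega> - Y (p b) \<omega>)" for p \<omega>
  proof -
    have "S p \<omega> - S (p \<circ> t) \<omega> = (\<Sum>r\<in>{1..J}. w r * Y (p r) \<omega> - w r * Y (p (t r)) \<omega>)"
      unfolding S_def by (simp add: sum_subtractf)
    also have "\<dots> = (\<Sum>r\<in>{a,b}. w r * Y (p r) \<omega> - w r * Y (p (t r)) \<omega>)"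
      by (rule sum.mono_neutral_right) (use a1 ab bJ in \<open>auto simp: t_def\<close>)
    also have "\<dots> = (w a - w b) * (Y (p a) \<omega> - Y (p b) \<omega>)"
      using ab by (simp add: t_def algebra_simps)
    finally show ?thesis .
  qed
  have wab: "w a > w b" using w_dec a1 ab bJ by blast
  have piece: "0 \<le> (\<integral>\<omega>. indicator (?A \<inter> B p) \<omega> * (Y (p a) \<omega> - Y (p b) \<omega>) \<partial>M)" if pP: "p \<in> Pm" for p
  proof -
    let ?E = "?A \<inter> B p"
    let ?C = "\<lambda>q. real_cond_exp M F (S q)"
    have pb: "bij_betw p {1..J} {1..J}" using pP unfolding Pm_def by auto
    have ptb: "bij_betw (p \<circ> t) {1..J} {1..J}" using bij_betw_trans[OF tbij pb] .
    have "(w a - w b) * (\<integral>\<omega>. indicator ?E \<omega> * (Y (p a) \<omega> - Y (p b) \<omega>) \<partial>M)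
        = (\<integral>\<omega>. (w a - w b) * (indicator ?E \<omega> * (Y (p a) \<omega> - Y (p b) \<omega>)) \<partial>M)"
      by (rule integral_mult_right_zero[symmetric])
    also have "\<dots> = (\<integral>\<omega>. indicator ?E \<omega> * (S p \<omega> - S (p \<circ> t) \<omega>) \<partial>M)"
      by (rule Bochner_Integration.integral_cong[OF refl]) (simp only: Sdiff mult.left_commute)
    also have "\<dots> = (\<integral>\<omega>. indicator ?E \<omega> * S p \<omega> \<partial>M) - (\<integral>\<omega>. indicator ?E \<omega> * S (p \<circ> t) \<omega> \<partial>M)"
      using integrable_mult_indicator[OF ABM[OF pP] SI[OF pb]]
            integrable_mult_indicator[OF ABM[OF pP] SI[OF ptb]]
      by (simp add: right_diff_distrib)
    also have "\<dots> = (\<integral>\<omega>. indicator ?E \<omega> * ?C p \<omega> \<partial>M) - (\<integral>\<omega>. indicator ?E \<omega> * ?C (p \<circ> t) \<omega> \<partial>M)"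
      using S.real_cond_exp_intA[OF SI[OF pb] ABF[OF pP]]
            S.real_cond_exp_intA[OF SI[OF ptb] ABF[OF pP]]
      unfolding set_lebesgue_integral_def by simp
    also have "\<dots> = (\<integral>\<omega>. indicator ?E \<omega> * (?C p \<omega> - ?C (p \<circ> t) \<omega>) \<partial>M)"
      using integrable_mult_indicator[OF ABM[OF pP] S.real_cond_exp_int(1)[OF SI[OF pb]]]
            integrable_mult_indicator[OF ABM[OF pP] S.real_cond_exp_int(1)[OF SI[OF ptb]]]
      by (simp add: right_diff_distrib)
    also have "\<dots> \<ge> 0"
    proof (rule integral_nonneg_AE)
      show "AE \<omega> in M. 0 \<le> indicator ?E \<omega> * (?C p \<omega> - ?C (p \<circ> t) \<omega>)"
        using unbiased
      proof eventually_elim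
        case (elim \<omega>)
        show ?case
        proof (cases "\<omega> \<in> ?E")
          case True
          then have eq: "\<sigma> \<omega> r = p r" if "r \<in> {1..J}" for r using that unfolding B_def by auto
          have "(\<lambda>\<omega>'. \<Sum>r\<in>{1..J}. w r * Y (\<sigma> \<omega> r) \<omega>') = S p"
            unfolding S_def using eq by (intro ext sum.cong) auto
          moreover have "(\<lambda>\<omega>'. \<Sum>r\<in>{1..J}. w r * Y ((p \<circ> t) r) \<omega>') = S (p \<circ> t)"
            unfolding S_def by simp
          ultimately have "?C (p \<circ> t) \<omega> \<le> ?C p \<omega>"
            using elim[rule_format, OF ptb] unfolding F_def by simp
          then show ?thesis using True by simp
        qed simp
      qed
    qed
    finally have "0 \<le> (w a - w b) * (\<integral>\<omega>. indicator ?E \<omega> * (Y (p a) \<omega> - Y (p b) \<omega>) \<partial>M)" .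
    then show ?thesis using wab by (simp add: zero_le_mult_iff)
  qed
  define \<rho> where "\<rho> \<omega> = restrict (\<sigma> \<omega>) {1..J}" for \<omega>
  have \<rho>P: "\<rho> \<omega> \<in> Pm" if "\<omega> \<in> space M" for \<omega>
  proof -
    have "bij_betw (\<rho> \<omega>) {1..J} {1..J}"
      using \<sigma>_bij[OF that] by (subst bij_betw_cong[where g="\<sigma> \<omega>"]) (auto simp: \<rho>_def)
    moreover have "\<rho> \<omega> \<in> {1..J} \<rightarrow>\<^sub>E {1..J}"
      using \<sigma>_bij[OF that] unfolding \<rho>_def by (auto dest: bij_betwE)
    ultimately show ?thesis unfolding Pm_def by simp
  qed
  have inB: "\<omega> \<in> B p \<longleftrightarrow> p = \<rho> \<omega>" if "\<omega> \<in> space M" "p \<in> Pm" for \<omega> p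
  proof
    assume "\<omega> \<in> B p"
    then show "p = \<rho> \<omega>" using that(2) unfolding B_def \<rho>_def Pm_def
      by (intro extensionalityI[where A="{1..J}"]) (auto simp: PiE_def)
  qed (use that in \<open>auto simp: B_def \<rho>_def\<close>)
  have pw: "indicator ?A \<omega> * (Y (\<sigma> \<omega> a) \<omega> - Y (\<sigma> \<omega> b) \<omega>) =
      (\<Sum>p\<in>Pm. indicator (?A \<inter> B p) \<omega> * (Y (p a) \<omega> - Y (p b) \<omega>))" if \<omega>: "\<omega> \<in> space M" for \<omega>
  proof -
    have "(\<Sum>p\<in>Pm. indicator (?A \<inter> B p) \<omega> * (Y (p a) \<omega> - Y (p b) \<omega>))
        = (\<Sum>p\<in>Pm. if p = \<rho> \<omega> then indicator ?A \<omega> * (Y (p a) \<omega> - Y (p b) \<omega>) else 0)"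
      by (intro sum.cong refl) (auto simp: inB[OF \<omega>] indicator_def)
    also have "\<dots> = indicator ?A \<omega> * (Y (\<rho> \<omega> a) \<omega> - Y (\<rho> \<omega> b) \<omega>)"
      using finP \<rho>P[OF \<omega>] by (simp add: sum.delta')
    also have "\<dots> = indicator ?A \<omega> * (Y (\<sigma> \<omega> a) \<omega> - Y (\<sigma> \<omega> b) \<omega>)"
      using aJ bJ' by (simp add: \<rho>_def)
    finally show ?thesis by simp
  qed
  have "(\<integral>\<omega>. indicator ?A \<omega> * (Y (\<sigma> \<omega> a) \<omega> - Y (\<sigma> \<omega> b) \<omega>) \<partial>M)
      = (\<integral>\<omega>. (\<Sum>p\<in>Pm. indicator (?A \<inter> B p) \<omega> * (Y (p a) \<omega> - Y (p b) \<omega>)) \<partial>M)"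
    by (rule Bochner_Integration.integral_cong[OF refl]) (rule pw)
  also have "\<dots> = (\<Sum>p\<in>Pm. (\<integral>\<omega>. indicator (?A \<inter> B p) \<omega> * (Y (p a) \<omega> - Y (p b) \<omega>) \<partial>M))"
  proof (rule Bochner_Integration.integral_sum[where f="\<lambda>p \<omega>. indicator (?A \<inter> B p) \<omega> * (Y (p a) \<omega> - Y (p b) \<omega>)"])
    fix p assume "p \<in> Pm"
    then show "integrable M (\<lambda>\<omega>. indicator (?A \<inter> B p) \<omega> * (Y (p a) \<omega> - Y (p b) \<omega>))"
      using integrable_mult_indicator[OF ABM[of p] Bochner_Integration.integrable_diff[OF YI[of p a] YI[of p b]]] aJ bJ' by simp
  qed
  also have "\<dots> \<ge> 0" by (intro sum_nonneg piece)
  finally show "cond_exp_event M ?A (\<lambda>\<omega>. Y (\<sigma> \<omega> a) \<omega> - Y (\<sigma> \<omega> b) \<omega>) \<ge> 0"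
    unfolding cond_exp_event_def using mpos by simp
qed

end
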